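(* Let $a,c\ge 0$ with $a\neq c$, and let $f^*:\{0,1\}^4\to\mathbb{R}_{\ge 0}$ be given by $f^*(0011)=f^*(1100)=a$, $f^*(0101)=f^*(1010)=c$, and $f^*(x)=0$ for all other $x\in\{0,1\}^4$. Then $f^*$ is not windable.
   Context: Windability. For a finite set $J$ and $x\in\{0,1\}^J$, let $\mathcal{M}_x$ be the set of partitions of $\{i\in J: x_i=1\}$ into pairs and at most one singleton. For $x,y\in\{0,1\}^J$, $x\oplus y$ denotes coordinatewise XOR, and for a block $S$ of a partition, $x\oplus S$ denotes the vector obtained from $x$ by replacing $x_i$ with $1-x_i$ for the one or two elements $i\in S$. A function $f:\{0,1\}^J\to\mathbb{R}_{\ge 0}$ is windable if there exist values $B(x,y,M)\ge 0$, for all $x,y\in\{0,1\}^J$ and all $M\in\mathcal{M}_{x\oplus y}$, such that (i) $f(x)f(y)=\sum_{M\in\mathcal{M}_{x\oplus y}}B(x,y,M)$ for all $x,y\in\{0,1\}^J$, and (ii) $B(x,y,M)=B(x\oplus S,y\oplus S,M)$ for all $x,y\in\{0,1\}^J$, all $M\in\mathcal{M}_{x\oplus y}$ and all $S\in M$. Here $J=\{1,2,3,4\}$ and a string $x_1x_2x_3x_4$ denotes the input $(x_1,x_2,x_3,x_4)$. *)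

theory Defs
  imports Complex_Main
begin

text \<open>Vectors x in {0,1}^J are encoded by their supports {i \<in> J. x_i = 1},
  i.e. subsets of J. Coordinatewise XOR is symmetric difference.\<close>

definition symdiff :: "'a set \<Rightarrow> 'a set \<Rightarrow> 'a set" where
  "symdiff A B = (A - B) \<union> (B - A)"

definition pair_partitions :: "'a set \<Rightarrow> 'a set set set" where
  "pair_partitions D = {M. (\<forall>S\<in>M. card S = 1 \<or> card S = 2)
       \<and> (\<forall>S\<in>M. \<forall>T\<in>M. S \<noteq> T \<longrightarrow> S \<inter> T = {})
       \<and> \<Union>M = D
       \<and> card {S\<in>M. card S = 1} \<le> 1}"

definition windable :: "'a set \<Rightarrow> ('a set \<Rightarrow> real) \<Rightarrow> bool" where
  "windable J f \<longleftrightarrow> (\<exists>B :: 'a set \<Rightarrow> 'a set \<Rightarrow> 'a set set \<Rightarrow> real.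
      (\<forall>x y M. x \<subseteq> J \<longrightarrow> y \<subseteq> J \<longrightarrow> M \<in> pair_partitions (symdiff x y) \<longrightarrow> B x y M \<ge> 0)
    \<and> (\<forall>x y. x \<subseteq> J \<longrightarrow> y \<subseteq> J \<longrightarrow>
          f x * f y = (\<Sum>M\<in>pair_partitions (symdiff x y). B x y M))
    \<and> (\<forall>x y M S. x \<subseteq> J \<longrightarrow> y \<subseteq> J \<longrightarrow> M \<in> pair_partitions (symdiff x y) \<longrightarrow> S \<in> M \<longrightarrow>
          B x y M = B (symdiff x S) (symdiff y S) M))"

text \<open>x_1x_2x_3x_4 = 0011 has support {3,4}, 1100 -> {1,2}, 0101 -> {2,4}, 1010 -> {1,3}.\<close>
definition fstar :: "real \<Rightarrow> real \<Rightarrow> nat set \<Rightarrow> real" where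
  "fstar a c x = (if x = {3,4} \<or> x = {1,2} then a
                  else if x = {2,4} \<or> x = {1,3} then c else 0)"

end

theory Submission
  imports Defs
begin

lemma pp_fin: "finite D \<Longrightarrow> finite (pair_partitions D)"
proof -
  assume "finite D"
  have "pair_partitions D \<subseteq> Pow (Pow D)" by (auto simp: pair_partitions_def)
  thus ?thesis using \<open>finite D\<close> by (meson finite_Pow_iff finite_subset)
qed

lemma sd_sd: "symdiff (symdiff x S) (symdiff y S) = symdiff x y"
  by (auto simp: symdiff_def)

lemma small_sub:
  assumes "S \<subseteq> D" "(a::nat) \<in> S" "card S = 1 \<or> card S = 2"
  shows "S = {a} \<or> (\<exists>b\<in>D. b \<noteq> a \<and> S = {a,b})"
  using assms(3)
proof
  assume "card S = 1"
  then obtain u where "S = {u}" by (auto simp: card_1_singleton_iff)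
  thus ?thesis using assms by auto
next
  assume "card S = 2"
  then obtain u v where "S = {u,v}" "u \<noteq> v" by (auto simp: card_2_iff)
  thus ?thesis using assms by auto
qed

lemma comb:
  assumes M: "M \<in> pair_partitions {1::nat,2,3,4}" and ne: "M \<noteq> {{1,4},{2,3}}"
  shows "\<exists>S\<in>M. S = {1} \<or> S = {1,2} \<or> S = {1,3} \<or> S = {2}"
proof (rule ccontr)
  assume nc: "\<not> ?thesis"
  have card: "\<And>S. S \<in> M \<Longrightarrow> card S = 1 \<or> card S = 2"
   and disj: "\<And>S T. S \<in> M \<Longrightarrow> T \<in> M \<Longrightarrow> S \<noteq> T \<Longrightarrow> S \<inter> T = {}"
   and un: "\<Union>M = {1,2,3,4}" using M by (auto simp: pair_partitions_def)
  obtain S1 where S1: "S1 \<in> M" "1 \<in> S1" using un by blast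
  have "S1 \<subseteq> {1,2,3,4}" using S1 un by blast
  from small_sub[OF this S1(2) card[OF S1(1)]] nc S1 have S1e: "S1 = {1,4}" by auto
  obtain S2 where S2: "S2 \<in> M" "2 \<in> S2" using un by blast
  have "S2 \<noteq> S1" using S1e S2 by auto
  hence d: "S2 \<inter> {1,4} = {}" using disj S1 S2 S1e by auto
  have "S2 \<subseteq> {1,2,3,4}" using S2 un by blast
  from small_sub[OF this S2(2) card[OF S2(1)]] nc S2 d have S2e: "S2 = {2,3}" by auto
  have "M \<subseteq> {{1,4},{2,3}}"
  proof
    fix T assume T: "T \<in> M"
    show "T \<in> {{1,4},{2,3}}"
    proof (rule ccontr)
      assume "T \<notin> {{1,4},{2,3}}"
      hence "T \<inter> {1,4} = {}" "T \<inter> {2,3} = {}" using disj T S1 S2 S1e S2e by auto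
      moreover have "T \<subseteq> {1,2,3,4}" using T un by blast
      ultimately have "T = {}" by auto
      thus False using card[OF T] by auto
    qed
  qed
  moreover have "{{1,4},{2,3}} \<subseteq> M" using S1 S2 S1e S2e by auto
  ultimately show False using ne by auto
qed

lemma N_pp: "{{1::nat,4},{2,3}} \<in> pair_partitions {1,2,3,4}"
proof -
  have a: "{S \<in> {{1::nat,4},{2,3}}. card S = 1} = {}" by (rule set_eqI) (auto simp del: One_nat_def)
  have b: "\<forall>S\<in>{{1::nat,4},{2,3}}. card S = 1 \<or> card S = 2" by simp
  have c: "\<forall>S\<in>{{1::nat,4},{2,3}}. \<forall>T\<in>{{1::nat,4},{2,3}}. S \<noteq> T \<longrightarrow> S \<inter> T = {}" by simp
  have d: "\<Union>{{1::nat,4},{2,3}} = {1,2,3,4}" by auto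
  show ?thesis unfolding pair_partitions_def mem_Collect_eq a using b c d by simp
qed

lemma fz: "card x \<noteq> 2 \<Longrightarrow> fstar a c x = 0" by (auto simp: fstar_def)
lemma fz2: "fstar a c {1::nat,4} = 0" "fstar a c {2::nat,3} = 0" by (auto simp: fstar_def doubleton_eq_iff)
lemma z1: "S = {1} \<or> S={1,2} \<or> S={1,3} \<or> S={2} \<Longrightarrow> fstar a c (symdiff {3::nat,4} S) = 0"
proof (elim disjE)
  assume "S = {1}" moreover have "symdiff {3::nat,4} {1} = {1,3,4}" by (auto simp: symdiff_def)
  ultimately show ?thesis by (simp add: fz)
next
  assume "S = {1,2}" moreover have "symdiff {3::nat,4} {1,2} = {1,2,3,4}" by (auto simp: symdiff_def)
  ultimately show ?thesis by (simp add: fz)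
next
  assume "S = {1,3}" moreover have "symdiff {3::nat,4} {1,3} = {1,4}" by (auto simp: symdiff_def)
  ultimately show ?thesis by (simp only: fz2)
next
  assume "S = {2}" moreover have "symdiff {3::nat,4} {2} = {2,3,4}" by (auto simp: symdiff_def)
  ultimately show ?thesis by (simp add: fz)
qed
lemma z2: "S = {1} \<or> S={1,2} \<or> S={1,3} \<or> S={2} \<Longrightarrow> fstar a c (symdiff {1::nat,3} S) = 0"
proof (elim disjE)
  assume "S = {1}" moreover have "symdiff {1::nat,3} {1} = {3}" by (auto simp: symdiff_def)
  ultimately show ?thesis by (simp add: fz)
next
  assume "S = {1,2}" moreover have "symdiff {1::nat,3} {1,2} = {2,3}" by (auto simp: symdiff_def)
  ultimately show ?thesis by (simp only: fz2)
next
  assume "S = {1,3}" moreover have "symdiff {1::nat,3} {1,3} = {}" by (auto simp: symdiff_def)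
  ultimately show ?thesis by (simp add: fz)
next
  assume "S = {2}" moreover have "symdiff {1::nat,3} {2} = {1,2,3}" by (auto simp: symdiff_def)
  ultimately show ?thesis by (simp add: fz)
qed

lemma sd_sub: "symdiff x y \<subseteq> x \<union> y" by (auto simp: symdiff_def)

lemma fa: "fstar a c {3::nat,4} = a" "fstar a c {1::nat,2} = a" "fstar a c {1::nat,3} = c" "fstar a c {2::nat,4} = c"
  by (simp_all add: fstar_def doubleton_eq_iff)

lemma kill_gen:
  fixes B :: "nat set \<Rightarrow> nat set \<Rightarrow> nat set set \<Rightarrow> real" and J :: "nat set"
  assumes H1: "\<And>x y M. x \<subseteq> J \<Longrightarrow> y \<subseteq> J \<Longrightarrow> M \<in> pair_partitions (symdiff x y) \<Longrightarrow> B x y M \<ge> 0"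
    and H2: "\<And>x y. x \<subseteq> J \<Longrightarrow> y \<subseteq> J \<Longrightarrow>
          f x * f y = (\<Sum>M\<in>pair_partitions (symdiff x y). B x y M)"
    and H3: "\<And>x y M S. x \<subseteq> J \<Longrightarrow> y \<subseteq> J \<Longrightarrow> M \<in> pair_partitions (symdiff x y) \<Longrightarrow> S \<in> M \<Longrightarrow>
          B x y M = B (symdiff x S) (symdiff y S) M"
    and J: "finite J"
    and xy: "x \<subseteq> J" "y \<subseteq> J"
     and M: "M \<in> pair_partitions (symdiff x y)" and S: "S \<in> M"
     and z: "f (symdiff x S) * f (symdiff y S) = 0"
  shows "B x y M = 0"
  proof -
    have "\<Union>M = symdiff x y" using M by (simp add: pair_partitions_def)
    hence "S \<subseteq> symdiff x y" using S by blast
    hence "S \<subseteq> J" using xy sd_sub[of x y] by blast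
    hence x': "symdiff x S \<subseteq> J" "symdiff y S \<subseteq> J" using xy sd_sub[of x S] sd_sub[of y S] by blast+
    have fin: "finite (symdiff (symdiff x S) (symdiff y S))" 
    proof (rule finite_subset[OF _ J])
      show "symdiff (symdiff x S) (symdiff y S) \<subseteq> J" using x' sd_sub[of "symdiff x S" "symdiff y S"] by blast
    qed
    have M': "M \<in> pair_partitions (symdiff (symdiff x S) (symdiff y S))" using M by (simp only: sd_sd)
    have "(\<Sum>M\<in>pair_partitions (symdiff (symdiff x S) (symdiff y S)). B (symdiff x S) (symdiff y S) M) = 0"
      using H2[OF x'] z by linarith
    hence "\<forall>M\<in>pair_partitions (symdiff (symdiff x S) (symdiff y S)). B (symdiff x S) (symdiff y S) M = 0"
      using sum_nonneg_eq_0_iff[OF pp_fin[OF fin]] H1[OF x'] by blast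
    hence "B (symdiff x S) (symdiff y S) M = 0" using M' by blast
    thus ?thesis using H3[OF xy M S] by simp
  qed

theorem proposition2:
  fixes a c :: real
  assumes "a \<ge> 0" and "c \<ge> 0" and "a \<noteq> c"
  shows "\<not> windable {1::nat,2,3,4} (fstar a c)"
proof
  assume "windable {1::nat,2,3,4} (fstar a c)"
  then obtain B :: "nat set \<Rightarrow> nat set \<Rightarrow> nat set set \<Rightarrow> real" where
    HB: "(\<forall>x y M. x \<subseteq> {1,2,3,4} \<longrightarrow> y \<subseteq> {1,2,3,4} \<longrightarrow> M \<in> pair_partitions (symdiff x y) \<longrightarrow> B x y M \<ge> 0)
    \<and> (\<forall>x y. x \<subseteq> {1,2,3,4} \<longrightarrow> y \<subseteq> {1,2,3,4} \<longrightarrow>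
          fstar a c x * fstar a c y = (\<Sum>M\<in>pair_partitions (symdiff x y). B x y M))
    \<and> (\<forall>x y M S. x \<subseteq> {1,2,3,4} \<longrightarrow> y \<subseteq> {1,2,3,4} \<longrightarrow> M \<in> pair_partitions (symdiff x y) \<longrightarrow> S \<in> M \<longrightarrow>
          B x y M = B (symdiff x S) (symdiff y S) M)"
    unfolding windable_def by (erule exE)
  note H1 = HB[THEN conjunct1, rule_format]
  note H2 = HB[THEN conjunct2, THEN conjunct1, rule_format]
  note H3 = HB[THEN conjunct2, THEN conjunct2, rule_format]
  have kill: "B x y M = 0" if "x \<subseteq> {1,2,3,4}" "y \<subseteq> {1,2,3,4}"
     "M \<in> pair_partitions (symdiff x y)" "S \<in> M"
     "fstar a c (symdiff x S) * fstar a c (symdiff y S) = 0" for x y M S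
    using kill_gen[where J="{1,2,3,4}" and B=B and f="fstar a c", OF H1 H2 H3 _ that] by simp
  define N where "N = {{1::nat,4},{2,3}}"
  have single: "(\<Sum>M\<in>pair_partitions {1,2,3,4}. g M) = g N"
    if "\<And>M. M \<in> pair_partitions {1,2,3,4} \<Longrightarrow> M \<noteq> N \<Longrightarrow> g M = 0" for g :: "nat set set \<Rightarrow> real"
  proof -
    have fin: "finite (pair_partitions {1::nat,2,3,4})" by (rule pp_fin) simp
    have NN: "N \<in> pair_partitions {1::nat,2,3,4}" unfolding N_def by (rule N_pp)
    have "(\<Sum>M\<in>pair_partitions {1,2,3,4}. g M) = g N + (\<Sum>M\<in>pair_partitions {1,2,3,4} - {N}. g M)"
      by (rule sum.remove[OF fin NN])
    moreover have "(\<Sum>M\<in>pair_partitions {1,2,3,4} - {N}. g M) = 0"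
      by (rule sum.neutral) (use that in blast)
    ultimately show ?thesis by simp
  qed
  have sd1: "symdiff {3::nat,4} {1,2} = {1,2,3,4}" by (auto simp: symdiff_def)
  have sd2: "symdiff {1::nat,3} {2,4} = {1,2,3,4}" by (auto simp: symdiff_def)
  have e1: "a * a = B {3,4} {1,2} N"
  proof -
    have "a * a = fstar a c {3,4} * fstar a c {1,2}" by (simp only: fa)
    also have "\<dots> = (\<Sum>M\<in>pair_partitions {1,2,3,4}. B {3,4} {1,2} M)" using H2[of "{3,4}" "{1,2}"] sd1 by simp
    also have "\<dots> = B {3,4} {1,2} N"
    proof (rule single)
      fix M assume M: "M \<in> pair_partitions {1::nat,2,3,4}" "M \<noteq> N"
      then obtain S where S: "S \<in> M" "S = {1} \<or> S = {1,2} \<or> S = {1,3} \<or> S = {2}"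
        using comb N_def by blast
      show "B {3,4} {1,2} M = 0"
        by (rule kill[of _ _ _ S]) (use M S sd1 z1[OF S(2)] in simp_all)
    qed
    finally show ?thesis .
  qed
  have e2: "c * c = B {1,3} {2,4} N"
  proof -
    have "c * c = fstar a c {1,3} * fstar a c {2,4}" by (simp only: fa)
    also have "\<dots> = (\<Sum>M\<in>pair_partitions {1,2,3,4}. B {1,3} {2,4} M)" using H2[of "{1,3}" "{2,4}"] sd2 by simp
    also have "\<dots> = B {1,3} {2,4} N"
    proof (rule single)
      fix M assume M: "M \<in> pair_partitions {1::nat,2,3,4}" "M \<noteq> N"
      then obtain S where S: "S \<in> M" "S = {1} \<or> S = {1,2} \<or> S = {1,3} \<or> S = {2}"
        using comb N_def by blast
      show "B {1,3} {2,4} M = 0"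
        by (rule kill[of _ _ _ S]) (use M S sd2 z2[OF S(2)] in simp_all)
    qed
    finally show ?thesis .
  qed
  have "B {3,4} {1,2} N = B (symdiff {3,4} {1,4}) (symdiff {1,2} {1,4}) N"
  proof (rule H3)
    show "{3::nat,4} \<subseteq> {1,2,3,4}" "{1::nat,2} \<subseteq> {1,2,3,4}" by auto
    show "N \<in> pair_partitions (symdiff {3,4} {1,2})" unfolding sd1 N_def by (rule N_pp)
    show "{1,4} \<in> N" unfolding N_def by simp
  qed
  also have "symdiff {3::nat,4} {1,4} = {1,3}" by (auto simp: symdiff_def)
  also have "symdiff {1::nat,2} {1,4} = {2,4}" by (auto simp: symdiff_def)
  finally have "a * a = c * c" using e1 e2 by simp
  hence "a = c" using assms(1,2) by (metis abs_of_nonneg real_sqrt_abs2 real_sqrt_mult_self)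
  thus False using assms(3) by simp
qed

end
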